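(* Let $\nu_{AB}$ be a density operator on $\mathbb{C}^2\otimes\mathbb{C}^{d}$ whose marginal $\nu_A=\operatorname{tr}_B\nu_{AB}$ has spectrum $\{\frac{1-\eta}{2},\frac{1+\eta}{2}\}$ for some $\eta\in[0,1)$, and let $\mu_{AB}:=(\nu_A^{-1/2}\otimes\mathbb{1})\nu_{AB}(\nu_A^{-1/2}\otimes\mathbb{1})$. Then $$\mu_{AB}\ge s(\eta)\,\nu_{AB}-t(\eta)\,\frac{\mathbb{1}}{2}\otimes\nu_B,$$ where $\nu_B=\operatorname{tr}_A\nu_{AB}$, $s(\eta):=\frac{2}{\sqrt{1-\eta^2}}$ and $t(\eta):=\frac{4}{\sqrt{1-\eta^2}}-\frac{4}{1+\eta}$.
   Context: The inequality is in the positive semidefinite (Loewner) order. *)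

theory Defs
  imports "Jordan_Normal_Form.Schur_Decomposition" "Jordan_Normal_Form.Spectral_Radius"
begin

text \<open>Matrices on C^2 (x) C^d are represented as complex (2*d) x (2*d) matrices,
  with the basis |i> (x) |k> corresponding to index i*d + k.\<close>

definition mtrace :: "complex mat \<Rightarrow> complex" where
  "mtrace A = (\<Sum>i<dim_row A. A $$ (i, i))"

definition psd :: "nat \<Rightarrow> complex mat \<Rightarrow> bool" where
  "psd n A \<longleftrightarrow> A \<in> carrier_mat n n \<and> mat_adjoint A = A \<and>
     (\<forall>v. dim_vec v = n \<longrightarrow> 0 \<le> Re (\<Sum>i<n. cnj (v $ i) * (A *\<^sub>v v) $ i))"

definition loewner_le :: "nat \<Rightarrow> complex mat \<Rightarrow> complex mat \<Rightarrow> bool" where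
  "loewner_le n A B \<longleftrightarrow> A \<in> carrier_mat n n \<and> B \<in> carrier_mat n n \<and> psd n (B - A)"

definition density_op :: "nat \<Rightarrow> complex mat \<Rightarrow> bool" where
  "density_op n A \<longleftrightarrow> psd n A \<and> mtrace A = 1"

definition kron :: "nat \<Rightarrow> nat \<Rightarrow> complex mat \<Rightarrow> complex mat \<Rightarrow> complex mat" where
  "kron dA dB A B = mat (dA * dB) (dA * dB)
     (\<lambda>(i, j). A $$ (i div dB, j div dB) * B $$ (i mod dB, j mod dB))"

text \<open>Partial traces: ptrace_B gives the A-marginal, ptrace_A gives the B-marginal.\<close>
definition ptrace_B :: "nat \<Rightarrow> nat \<Rightarrow> complex mat \<Rightarrow> complex mat" where
  "ptrace_B dA dB M = mat dA dA (\<lambda>(i, j). \<Sum>k<dB. M $$ (i * dB + k, j * dB + k))"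

definition ptrace_A :: "nat \<Rightarrow> nat \<Rightarrow> complex mat \<Rightarrow> complex mat" where
  "ptrace_A dA dB M = mat dB dB (\<lambda>(k, l). \<Sum>i<dA. M $$ (i * dB + k, i * dB + l))"

definition inv_sqrt :: "nat \<Rightarrow> complex mat \<Rightarrow> complex mat" where
  "inv_sqrt n A = (THE X. psd n X \<and> X * X * A = 1\<^sub>m n)"

definition s_fun :: "real \<Rightarrow> real" where
  "s_fun \<eta> = 2 / sqrt (1 - \<eta>\<^sup>2)"

definition t_fun :: "real \<Rightarrow> real" where
  "t_fun \<eta> = 4 / sqrt (1 - \<eta>\<^sup>2) - 4 / (1 + \<eta>)"

end

theory Submission
  imports Defs
begin

lemma adj_carrier: "A \<in> carrier_mat n m \<Longrightarrow> mat_adjoint A \<in> carrier_mat m n"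
  unfolding mat_adjoint_def by auto

lemma adj_index: "A \<in> carrier_mat n m \<Longrightarrow> i < m \<Longrightarrow> j < n \<Longrightarrow> mat_adjoint A $$ (i,j) = cnj (A $$ (j,i))"
  unfolding mat_adjoint_def by (auto simp: mat_of_rows_def)

lemma herm_iff: assumes "A \<in> carrier_mat n n"
  shows "mat_adjoint A = A \<longleftrightarrow> (\<forall>i<n. \<forall>j<n. A $$ (i,j) = cnj (A $$ (j,i)))"
proof
  assume h: "mat_adjoint A = A" show "\<forall>i<n. \<forall>j<n. A $$ (i,j) = cnj (A $$ (j,i))"
  proof (intro allI impI)
    fix i j assume "i < n" "j < n"
    then have "mat_adjoint A $$ (i,j) = cnj (A $$ (j,i))" by (rule adj_index[OF assms])
    then show "A $$ (i,j) = cnj (A $$ (j,i))" using h by simp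
  qed
next
  assume h: "\<forall>i<n. \<forall>j<n. A $$ (i,j) = cnj (A $$ (j,i))"
  show "mat_adjoint A = A"
  proof (rule eq_matI)
    fix i j assume "i < dim_row A" "j < dim_col A"
    then show "mat_adjoint A $$ (i,j) = A $$ (i,j)" using assms adj_index[OF assms, of i j] h[rule_format, of i j] by simp
  qed (use assms adj_carrier[OF assms] in simp_all)
qed

definition Sf :: "nat \<Rightarrow> complex mat \<Rightarrow> (nat \<Rightarrow> complex) \<Rightarrow> (nat \<Rightarrow> complex) \<Rightarrow> complex" where
  "Sf n M x y = (\<Sum>i<n. \<Sum>l<n. cnj (x i) * M $$ (i,l) * y l)"

lemma quad_Sf: assumes "M \<in> carrier_mat n n" "dim_vec v = n"
  shows "(\<Sum>i<n. cnj (v $ i) * (M *\<^sub>v v) $ i) = Sf n M (\<lambda>i. v $ i) (\<lambda>i. v $ i)"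
  unfolding Sf_def
proof (rule sum.cong[OF refl])
  fix i assume i: "i \<in> {..<n}"
  have "(M *\<^sub>v v) $ i = (\<Sum>l<n. M $$ (i,l) * v $ l)"
    using assms i by (auto simp: scalar_prod_def atLeast0LessThan)
  then show "cnj (v $ i) * (M *\<^sub>v v) $ i = (\<Sum>l<n. cnj (v $ i) * M $$ (i, l) * v $ l)"
    by (simp add: sum_distrib_left mult.assoc)
qed

lemma psd_Sf: assumes "psd n M" shows "0 \<le> Re (Sf n M x x)"
proof -
  let ?v = "vec n x"
  have M: "M \<in> carrier_mat n n" using assms unfolding psd_def by auto
  have h: "\<forall>v. dim_vec v = n \<longrightarrow> 0 \<le> Re (\<Sum>i<n. cnj (v $ i) * (M *\<^sub>v v) $ i)" using assms unfolding psd_def by blast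
  have "0 \<le> Re (\<Sum>i<n. cnj (?v $ i) * (M *\<^sub>v ?v) $ i)" using h[rule_format, of ?v] by simp
  also have "(\<Sum>i<n. cnj (?v $ i) * (M *\<^sub>v ?v) $ i) = Sf n M (\<lambda>i. ?v $ i) (\<lambda>i. ?v $ i)"
    by (rule quad_Sf[OF M]) simp
  also have "\<dots> = Sf n M x x" unfolding Sf_def by (intro sum.cong refl) auto
  finally show ?thesis .
qed

lemma psd_intro: assumes "M \<in> carrier_mat n n" "\<And>i j. i < n \<Longrightarrow> j < n \<Longrightarrow> M $$ (i,j) = cnj (M $$ (j,i))"
  "\<And>x. 0 \<le> Re (Sf n M x x)" shows "psd n M"
  unfolding psd_def
proof (intro conjI allI impI)
  show "mat_adjoint M = M" using herm_iff[OF assms(1)] assms(2) by blast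
  fix v :: "complex vec" assume "dim_vec v = n"
  then show "0 \<le> Re (\<Sum>i<n. cnj (v $ i) * (M *\<^sub>v v) $ i)" using quad_Sf[OF assms(1)] assms(3) by simp
qed (use assms in auto)

lemma Sf_cong: "(\<And>i. i < n \<Longrightarrow> x i = x' i) \<Longrightarrow> (\<And>i. i < n \<Longrightarrow> y i = y' i) \<Longrightarrow> Sf n M x y = Sf n M x' y'"
  unfolding Sf_def by (intro sum.cong refl) auto

lemma Sf_minus: assumes "A \<in> carrier_mat n n" "B \<in> carrier_mat n n" shows "Sf n (A - B) x y = Sf n A x y - Sf n B x y"
proof -
  have "Sf n (A - B) x y = (\<Sum>i<n. \<Sum>l<n. cnj (x i) * A $$ (i,l) * y l - cnj (x i) * B $$ (i,l) * y l)"
    unfolding Sf_def by (intro sum.cong refl) (use assms in \<open>auto simp: algebra_simps\<close>)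
  then show ?thesis unfolding Sf_def by (simp add: sum_subtractf)
qed

lemma Sf_smult: assumes "A \<in> carrier_mat n n" shows "Sf n (c \<cdot>\<^sub>m A) x y = c * Sf n A x y"
proof -
  have "Sf n (c \<cdot>\<^sub>m A) x y = (\<Sum>i<n. \<Sum>l<n. c * (cnj (x i) * A $$ (i,l) * y l))"
    unfolding Sf_def by (intro sum.cong refl) (use assms in \<open>auto simp: algebra_simps\<close>)
  then show ?thesis unfolding Sf_def by (simp add: sum_distrib_left)
qed

lemma Sf_add_left: "Sf n M (\<lambda>i. f i + g i) y = Sf n M f y + Sf n M g y"
proof -
  have "Sf n M (\<lambda>i. f i + g i) y = (\<Sum>i<n. \<Sum>l<n. cnj (f i) * M $$ (i,l) * y l + cnj (g i) * M $$ (i,l) * y l)"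
    unfolding Sf_def by (intro sum.cong refl) (simp add: distrib_right)
  then show ?thesis unfolding Sf_def by (simp add: sum.distrib)
qed

lemma Sf_add_right: "Sf n M x (\<lambda>i. f i + g i) = Sf n M x f + Sf n M x g"
proof -
  have "Sf n M x (\<lambda>i. f i + g i) = (\<Sum>i<n. \<Sum>l<n. cnj (x i) * M $$ (i,l) * f l + cnj (x i) * M $$ (i,l) * g l)"
    unfolding Sf_def by (intro sum.cong refl) (simp add: distrib_left)
  then show ?thesis unfolding Sf_def by (simp add: sum.distrib)
qed

lemma Sf_scale_left: "Sf n M (\<lambda>i. c * f i) y = cnj c * Sf n M f y"
proof -
  have "Sf n M (\<lambda>i. c * f i) y = (\<Sum>i<n. \<Sum>l<n. cnj c * (cnj (f i) * M $$ (i,l) * y l))"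
    unfolding Sf_def by (intro sum.cong refl) (simp add: mult.assoc)
  then show ?thesis unfolding Sf_def by (simp add: sum_distrib_left)
qed

lemma Sf_scale_right: "Sf n M x (\<lambda>i. c * f i) = c * Sf n M x f"
proof -
  have "Sf n M x (\<lambda>i. c * f i) = (\<Sum>i<n. \<Sum>l<n. c * (cnj (x i) * M $$ (i,l) * f l))"
    unfolding Sf_def by (intro sum.cong refl) (simp add: mult.commute mult.left_commute)
  then show ?thesis unfolding Sf_def by (simp add: sum_distrib_left)
qed

lemma sum_2d: fixes f :: "nat \<Rightarrow> 'a::comm_monoid_add" shows "(\<Sum>l<2*d. f l) = (\<Sum>m<2. \<Sum>k<d. f (m*d+k))"
proof -
  have "(\<Sum>l<2*d. f l) = (\<Sum>m<2. sum f {m*d..<m*d+d})"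
    using sum.nat_group[of f d 2] by (simp add: mult.commute)
  also have "\<dots> = (\<Sum>m<2. \<Sum>k<d. f (m*d+k))"
  proof (rule sum.cong[OF refl])
    fix m show "sum f {m*d..<m*d+d} = (\<Sum>k<d. f (m*d+k))"
      using sum.shift_bounds_nat_ivl[of f 0 "m*d" d] by (simp add: atLeast0LessThan add.commute)
  qed
  finally show ?thesis .
qed

lemma sum2: "(\<Sum>m<(2::nat). f m) = f 0 + f 1"
  by (simp add: numeral_2_eq_2)


lemma sum_swap4: "(\<Sum>i\<in>A. \<Sum>l\<in>A. \<Sum>b\<in>A. \<Sum>a\<in>A. F i l b a) = (\<Sum>a\<in>A. \<Sum>b\<in>A. \<Sum>i\<in>A. \<Sum>l\<in>A. F i l b a)"
proof -
  have "(\<Sum>i\<in>A. \<Sum>l\<in>A. \<Sum>b\<in>A. \<Sum>a\<in>A. F i l b a) = (\<Sum>i\<in>A. \<Sum>b\<in>A. \<Sum>a\<in>A. \<Sum>l\<in>A. F i l b a)"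
  proof (rule sum.cong[OF refl])
    fix i
    have "(\<Sum>l\<in>A. \<Sum>b\<in>A. \<Sum>a\<in>A. F i l b a) = (\<Sum>b\<in>A. \<Sum>l\<in>A. \<Sum>a\<in>A. F i l b a)" by (rule sum.swap)
    also have "\<dots> = (\<Sum>b\<in>A. \<Sum>a\<in>A. \<Sum>l\<in>A. F i l b a)" by (rule sum.cong[OF refl], rule sum.swap)
    finally show "(\<Sum>l\<in>A. \<Sum>b\<in>A. \<Sum>a\<in>A. F i l b a) = (\<Sum>b\<in>A. \<Sum>a\<in>A. \<Sum>l\<in>A. F i l b a)" .
  qed
  also have "\<dots> = (\<Sum>b\<in>A. \<Sum>i\<in>A. \<Sum>a\<in>A. \<Sum>l\<in>A. F i l b a)" by (rule sum.swap)
  also have "\<dots> = (\<Sum>b\<in>A. \<Sum>a\<in>A. \<Sum>i\<in>A. \<Sum>l\<in>A. F i l b a)" by (rule sum.cong[OF refl], rule sum.swap)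
  also have "\<dots> = (\<Sum>a\<in>A. \<Sum>b\<in>A. \<Sum>i\<in>A. \<Sum>l\<in>A. F i l b a)" by (rule sum.swap)
  finally show ?thesis .
qed

definition Kv :: "nat \<Rightarrow> complex mat \<Rightarrow> (nat \<Rightarrow> complex) \<Rightarrow> nat \<Rightarrow> complex" where
  "Kv n K x a = (\<Sum>l<n. K $$ (a,l) * x l)"

lemma Sf_KMK: assumes K: "K \<in> carrier_mat n n" and M: "M \<in> carrier_mat n n"
  and H: "\<And>i j. i < n \<Longrightarrow> j < n \<Longrightarrow> K $$ (i,j) = cnj (K $$ (j,i))"
  shows "Sf n (K * M * K) x x = Sf n M (Kv n K x) (Kv n K x)"
proof -
  let ?F = "\<lambda>i l b a. cnj (x i) * K $$ (i,a) * M $$ (a,b) * K $$ (b,l) * x l"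
  have e: "(K * M * K) $$ (i,l) = (\<Sum>b<n. (\<Sum>a<n. K $$ (i,a) * M $$ (a,b)) * K $$ (b,l))" if "i < n" "l < n" for i l
  proof -
    have "(K * M * K) $$ (i,l) = (\<Sum>a<n. K $$ (i,a) * (\<Sum>b<n. M $$ (a,b) * K $$ (b,l)))"
      using that K M by (simp add: scalar_prod_def atLeast0LessThan)
    also have "\<dots> = (\<Sum>a<n. \<Sum>b<n. K $$ (i,a) * M $$ (a,b) * K $$ (b,l))"
      by (simp add: sum_distrib_left mult.assoc)
    also have "\<dots> = (\<Sum>b<n. \<Sum>a<n. K $$ (i,a) * M $$ (a,b) * K $$ (b,l))" by (rule sum.swap)
    also have "\<dots> = (\<Sum>b<n. (\<Sum>a<n. K $$ (i, a) * M $$ (a, b)) * K $$ (b, l))"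
      by (simp add: sum_distrib_right)
    finally show ?thesis .
  qed
  have "Sf n (K * M * K) x x = (\<Sum>i<n. \<Sum>l<n. \<Sum>b<n. \<Sum>a<n. ?F i l b a)"
    unfolding Sf_def
    by (intro sum.cong refl) (simp add: e sum_distrib_left sum_distrib_right mult.assoc)
  also have "\<dots> = (\<Sum>a<n. \<Sum>b<n. \<Sum>i<n. \<Sum>l<n. ?F i l b a)" by (rule sum_swap4)
  also have "\<dots> = Sf n M (Kv n K x) (Kv n K x)"
    unfolding Sf_def Kv_def
  proof (intro sum.cong refl)
    fix a b assume a: "a \<in> {..<n}" and b: "b \<in> {..<n}"
    have c: "cnj (\<Sum>i<n. K $$ (a, i) * x i) = (\<Sum>i<n. cnj (x i) * K $$ (i,a))"
      by (simp add: H[OF _ a[simplified]] mult.commute)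
    show "(\<Sum>i<n. \<Sum>l<n. ?F i l b a) = cnj (\<Sum>i<n. K $$ (a, i) * x i) * M $$ (a, b) * (\<Sum>l<n. K $$ (b, l) * x l)"
      unfolding c by (simp add: sum_distrib_left sum_distrib_right mult.assoc, rule sum.swap)
  qed
  finally show ?thesis .
qed


lemma kron_carrier: "kron dA dB A B \<in> carrier_mat (dA*dB) (dA*dB)"
  unfolding kron_def by simp

lemma kron_index: "i < dA*dB \<Longrightarrow> j < dA*dB \<Longrightarrow> kron dA dB A B $$ (i,j) = A $$ (i div dB, j div dB) * B $$ (i mod dB, j mod dB)"
  unfolding kron_def by simp

lemma dm: assumes "k < (d::nat)" shows "(m*d+k) div d = m" "(m*d+k) mod d = k"
  using assms by auto

lemma Kv_kron: assumes d: "0 < d" and a: "a < 2*d" and Y: "Y \<in> carrier_mat 2 2"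
  shows "Kv (2*d) (kron 2 d Y (1\<^sub>m d)) x a = (\<Sum>m<2. Y $$ (a div d, m) * x (m*d + a mod d))"
proof -
  have "Kv (2*d) (kron 2 d Y (1\<^sub>m d)) x a = (\<Sum>m<2. \<Sum>k<d. kron 2 d Y (1\<^sub>m d) $$ (a, m*d+k) * x (m*d+k))"
    unfolding Kv_def by (rule sum_2d)
  also have "\<dots> = (\<Sum>m<2. \<Sum>k<d. (if k = a mod d then Y $$ (a div d, m) * x (m*d + a mod d) else 0))"
  proof (intro sum.cong refl)
    fix m k :: nat assume m: "m \<in> {..<2}" and k: "k \<in> {..<d}"
    have "m*d+k < 2*d" proof -
      have "m = 0 \<or> m = 1" using m by auto
      then show ?thesis using k by auto
    qed
    then show "kron 2 d Y (1\<^sub>m d) $$ (a, m*d+k) * x (m*d+k) = (if k = a mod d then Y $$ (a div d, m) * x (m*d + a mod d) else 0)"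
      using a k d by (simp add: kron_index dm)
  qed
  also have "\<dots> = (\<Sum>m<2. Y $$ (a div d, m) * x (m*d + a mod d))"
    using d by simp
  finally show ?thesis .
qed

lemma swap_blk: "(\<Sum>j\<in>A. \<Sum>k\<in>B. \<Sum>j'\<in>A. \<Sum>k'\<in>B. f j k j' k') = (\<Sum>k\<in>B. \<Sum>k'\<in>B. \<Sum>j\<in>A. \<Sum>j'\<in>A. f j k j' k')"
proof -
  have "(\<Sum>j\<in>A. \<Sum>k\<in>B. \<Sum>j'\<in>A. \<Sum>k'\<in>B. f j k j' k') = (\<Sum>k\<in>B. \<Sum>j\<in>A. \<Sum>j'\<in>A. \<Sum>k'\<in>B. f j k j' k')"
    by (rule sum.swap)
  also have "\<dots> = (\<Sum>k\<in>B. \<Sum>j\<in>A. \<Sum>k'\<in>B. \<Sum>j'\<in>A. f j k j' k')"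
    by (intro sum.cong refl sum.swap)
  also have "\<dots> = (\<Sum>k\<in>B. \<Sum>k'\<in>B. \<Sum>j\<in>A. \<Sum>j'\<in>A. f j k j' k')"
    by (intro sum.cong refl sum.swap)
  finally show ?thesis .
qed

lemma Sf_block: assumes "0 < d"
  shows "Sf (2*d) M x y = (\<Sum>k<d. \<Sum>k'<d. \<Sum>j<2. \<Sum>j'<2. cnj (x (j*d+k)) * M $$ (j*d+k, j'*d+k') * y (j'*d+k'))"
proof -
  have "Sf (2*d) M x y = (\<Sum>j<2. \<Sum>k<d. \<Sum>j'<2. \<Sum>k'<d. cnj (x (j*d+k)) * M $$ (j*d+k, j'*d+k') * y (j'*d+k'))"
  proof -
    have "Sf (2*d) M x y = (\<Sum>j<2. \<Sum>k<d. \<Sum>l<2*d. cnj (x (j*d+k)) * M $$ (j*d+k, l) * y l)"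
      unfolding Sf_def by (rule sum_2d)
    also have "\<dots> = (\<Sum>j<2. \<Sum>k<d. \<Sum>j'<2. \<Sum>k'<d. cnj (x (j*d+k)) * M $$ (j*d+k, j'*d+k') * y (j'*d+k'))"
      by (rule sum.cong[OF refl], rule sum.cong[OF refl], rule sum_2d)
    finally show ?thesis .
  qed
  also have "\<dots> = (\<Sum>k<d. \<Sum>k'<d. \<Sum>j<2. \<Sum>j'<2. cnj (x (j*d+k)) * M $$ (j*d+k, j'*d+k') * y (j'*d+k'))"
    by (rule swap_blk)
  finally show ?thesis .
qed


definition tens :: "nat \<Rightarrow> (nat \<Rightarrow> complex) \<Rightarrow> (nat \<Rightarrow> complex) \<Rightarrow> nat \<Rightarrow> complex" where
  "tens d u c a = u (a div d) * c (a mod d)"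

definition cfun :: "nat \<Rightarrow> (nat \<Rightarrow> complex) \<Rightarrow> (nat \<Rightarrow> complex) \<Rightarrow> nat \<Rightarrow> complex" where
  "cfun d u x k = (\<Sum>j<2. cnj (u j) * x (j*d+k))"

definition Ymat :: "real \<Rightarrow> real \<Rightarrow> (nat \<Rightarrow> complex) \<Rightarrow> (nat \<Rightarrow> complex) \<Rightarrow> complex mat" where
  "Ymat y1 y2 u1 u2 = mat 2 2 (\<lambda>(j,j'). of_real y1 * u1 j * cnj (u1 j') + of_real y2 * u2 j * cnj (u2 j'))"

lemma lt2: "(a::nat) < 2 \<Longrightarrow> a = 0 \<or> a = 1" by auto

lemma div_lt2: "(a::nat) < 2*d \<Longrightarrow> a div d < 2"
  by (simp add: less_mult_imp_div_less mult.commute)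

lemma Kv_decomp: assumes d: "0 < d" and a: "a < 2*d"
  shows "Kv (2*d) (kron 2 d (Ymat y1 y2 u1 u2) (1\<^sub>m d)) x a
     = of_real y1 * tens d u1 (cfun d u1 x) a + of_real y2 * tens d u2 (cfun d u2 x) a"
proof -
  have p: "a div d < 2" using div_lt2[OF a] .
  have Y: "Ymat y1 y2 u1 u2 \<in> carrier_mat 2 2" unfolding Ymat_def by simp
  show ?thesis
    unfolding Kv_kron[OF d a Y] tens_def cfun_def
    using p by (simp add: sum2 Ymat_def distrib_left distrib_right mult.assoc)
qed

lemma x_decomp: assumes d: "0 < d" and a: "a < 2*d"
  and U: "\<And>j j'. j < 2 \<Longrightarrow> j' < 2 \<Longrightarrow> u1 j * cnj (u1 j') + u2 j * cnj (u2 j') = (if j = j' then 1 else 0)"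
  shows "x a = tens d u1 (cfun d u1 x) a + tens d u2 (cfun d u2 x) a"
proof -
  have p: "a div d < 2" using div_lt2[OF a] .
  have "tens d u1 (cfun d u1 x) a + tens d u2 (cfun d u2 x) a
      = (u1 (a div d) * cnj (u1 0) + u2 (a div d) * cnj (u2 0)) * x (a mod d)
      + (u1 (a div d) * cnj (u1 1) + u2 (a div d) * cnj (u2 1)) * x (d + a mod d)"
    unfolding tens_def cfun_def by (simp add: sum2 algebra_simps)
  also have "\<dots> = x a"
  proof (cases "a div d = 0")
    case True
    then have "a < d" using d by (simp add: div_eq_0_iff)
    then show ?thesis using True U[of 0 0] U[of 0 1] by simp
  next
    case False
    then have "a div d = 1" using p by auto
    have "a = d * (a div d) + a mod d" by simp
    then have "a = d + a mod d" using \<open>a div d = 1\<close> by simp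
    then show ?thesis using \<open>a div d = 1\<close> U[of 1 0] U[of 1 1] by simp
  qed
  finally show ?thesis by simp
qed

lemma Sf_tens: assumes d: "0 < d"
  shows "Sf (2*d) M (tens d u c) (tens d u c) =
    (\<Sum>k<d. \<Sum>k'<d. (\<Sum>j<2. \<Sum>j'<2. cnj (u j) * M $$ (j*d+k, j'*d+k') * u j') * (cnj (c k) * c k'))"
  unfolding Sf_block[OF d]
proof (intro sum.cong refl)
  fix k k' assume k: "k \<in> {..<d}" and k': "k' \<in> {..<d}"
  then show "(\<Sum>j<2. \<Sum>j'<2. cnj (tens d u c (j * d + k)) * M $$ (j * d + k, j' * d + k') * tens d u c (j' * d + k')) =
         (\<Sum>j<2. \<Sum>j'<2. cnj (u j) * M $$ (j * d + k, j' * d + k') * u j') * (cnj (c k) * c k')"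
    by (simp add: tens_def dm sum2 algebra_simps)
qed

lemma Sf_T: assumes d: "0 < d"
  shows "Sf (2*d) (kron 2 d ((1/2) \<cdot>\<^sub>m 1\<^sub>m 2) (ptrace_A 2 d M)) x x =
    (\<Sum>k<d. \<Sum>k'<d. (1/2) * ((\<Sum>j<2. cnj (x (j*d+k)) * x (j*d+k')) * (\<Sum>i<2. M $$ (i*d+k, i*d+k'))))"
  unfolding Sf_block[OF d]
proof (intro sum.cong refl)
  fix k k' assume k: "k \<in> {..<d}" and k': "k' \<in> {..<d}"
  have f: "k < 2*d" "d+k < 2*d" "k div d = 0" "k mod d = k" "(d+k) div d = 1" "(d+k) mod d = k"
     "k' < 2*d" "d+k' < 2*d" "k' div d = 0" "k' mod d = k'" "(d+k') div d = 1" "(d+k') mod d = k'"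
    using k k' d by auto
  show "(\<Sum>j<2. \<Sum>j'<2. cnj (x (j * d + k)) * kron 2 d ((1/2) \<cdot>\<^sub>m 1\<^sub>m 2) (ptrace_A 2 d M) $$ (j * d + k, j' * d + k') * x (j' * d + k')) =
         (1/2) * ((\<Sum>j<2. cnj (x (j*d+k)) * x (j*d+k')) * (\<Sum>i<2. M $$ (i*d+k, i*d+k')))"
    using k k' d f by (simp add: sum2 kron_index ptrace_A_def algebra_simps)
qed


lemma inv_id:
  fixes a0 a1 b0 b1 a0' a1' b0' b1' x0 x1 x0' x1' z0 z1 n00 n01 n10 n11 :: complex
  assumes h1: "a0 * a0' + b0 * b0' = 1" and h2: "a0 * a1' + b0 * b1' = 0" and h3: "a1 * a0' + b1 * b0' = 0" and h4: "a1 * a1' + b1 * b1' = 1"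
  shows "x0' * (n00 + n11) * z0 + x1' * (n00 + n11) * z1 =
     (a0' * a0 * n00 + a0' * a1 * n01 + a1' * a0 * n10 + a1' * a1 * n11) *
     (a0 * x0' + a1 * x1') *
     (a0' * z0 + a1' * z1) +
     (b0' * b0 * n00 + b0' * b1 * n01 + b1' * b0 * n10 + b1' * b1 * n11) *
     (a0 * x0' + a1 * x1') *
     (a0' * z0 + a1' * z1) +
     (a0' * a0 * n00 + a0' * a1 * n01 + a1' * a0 * n10 + a1' * a1 * n11) *
     (b0 * x0' + b1 * x1') *
     (b0' * z0 + b1' * z1) +
     (b0' * b0 * n00 + b0' * b1 * n01 + b1' * b0 * n10 + b1' * b1 * n11) *
     (b0 * x0' + b1 * x1') *
     (b0' * z0 + b1' * z1)"
proof -
  have "(a0' * a0 * n00 + a0' * a1 * n01 + a1' * a0 * n10 + a1' * a1 * n11) * (a0 * x0' + a1 * x1') * (a0' * z0 + a1' * z1) +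
     (b0' * b0 * n00 + b0' * b1 * n01 + b1' * b0 * n10 + b1' * b1 * n11) * (a0 * x0' + a1 * x1') * (a0' * z0 + a1' * z1) +
     (a0' * a0 * n00 + a0' * a1 * n01 + a1' * a0 * n10 + a1' * a1 * n11) * (b0 * x0' + b1 * x1') * (b0' * z0 + b1' * z1) +
     (b0' * b0 * n00 + b0' * b1 * n01 + b1' * b0 * n10 + b1' * b1 * n11) * (b0 * x0' + b1 * x1') * (b0' * z0 + b1' * z1)
   = ((a0 * a0' + b0 * b0') * n00 + (a1 * a0' + b1 * b0') * n01 + (a0 * a1' + b0 * b1') * n10 + (a1 * a1' + b1 * b1') * n11)
     * (x0' * z0 * (a0 * a0' + b0 * b0') + x0' * z1 * (a0 * a1' + b0 * b1') + x1' * z0 * (a1 * a0' + b1 * b0') + x1' * z1 * (a1 * a1' + b1 * b1'))"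
    by (simp add: algebra_simps)
  also have "\<dots> = x0' * (n00 + n11) * z0 + x1' * (n00 + n11) * z1" unfolding h1 h2 h3 h4 by (simp add: algebra_simps)
  finally show ?thesis by simp
qed

lemma pointwise:
  fixes N :: "nat \<Rightarrow> nat \<Rightarrow> complex"
  assumes U: "\<And>j j'. j < 2 \<Longrightarrow> j' < 2 \<Longrightarrow> u1 j * cnj (u1 j') + u2 j * cnj (u2 j') = (if j = j' then 1 else 0)"
  shows "(\<Sum>j<2. cnj (x (j*d+k)) * x (j*d+k')) * (\<Sum>i<2. N i i) =
    (\<Sum>j<2. \<Sum>j'<2. cnj (u1 j) * N j j' * u1 j') * (cnj (cfun d u1 x k) * cfun d u1 x k') +
    (\<Sum>j<2. \<Sum>j'<2. cnj (u2 j) * N j j' * u2 j') * (cnj (cfun d u1 x k) * cfun d u1 x k') +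
    (\<Sum>j<2. \<Sum>j'<2. cnj (u1 j) * N j j' * u1 j') * (cnj (cfun d u2 x k) * cfun d u2 x k') +
    (\<Sum>j<2. \<Sum>j'<2. cnj (u2 j) * N j j' * u2 j') * (cnj (cfun d u2 x k) * cfun d u2 x k')"
proof -
  have inst: "cnj (x k) * (N 0 0 + N 1 1) * x k' + cnj (x (d+k)) * (N 0 0 + N 1 1) * x (d+k') =
     (cnj (u1 0) * u1 0 * N 0 0 + cnj (u1 0) * u1 1 * N 0 1 + cnj (u1 1) * u1 0 * N 1 0 + cnj (u1 1) * u1 1 * N 1 1) *
     (u1 0 * cnj (x k) + u1 1 * cnj (x (d+k))) * (cnj (u1 0) * x k' + cnj (u1 1) * x (d+k')) +
     (cnj (u2 0) * u2 0 * N 0 0 + cnj (u2 0) * u2 1 * N 0 1 + cnj (u2 1) * u2 0 * N 1 0 + cnj (u2 1) * u2 1 * N 1 1) *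
     (u1 0 * cnj (x k) + u1 1 * cnj (x (d+k))) * (cnj (u1 0) * x k' + cnj (u1 1) * x (d+k')) +
     (cnj (u1 0) * u1 0 * N 0 0 + cnj (u1 0) * u1 1 * N 0 1 + cnj (u1 1) * u1 0 * N 1 0 + cnj (u1 1) * u1 1 * N 1 1) *
     (u2 0 * cnj (x k) + u2 1 * cnj (x (d+k))) * (cnj (u2 0) * x k' + cnj (u2 1) * x (d+k')) +
     (cnj (u2 0) * u2 0 * N 0 0 + cnj (u2 0) * u2 1 * N 0 1 + cnj (u2 1) * u2 0 * N 1 0 + cnj (u2 1) * u2 1 * N 1 1) *
     (u2 0 * cnj (x k) + u2 1 * cnj (x (d+k))) * (cnj (u2 0) * x k' + cnj (u2 1) * x (d+k'))"
    by (rule inv_id) (use U[of 0 0] U[of 0 1] U[of 1 0] U[of 1 1] in simp_all)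
  show ?thesis using inst unfolding cfun_def by (simp add: sum2 algebra_simps)
qed

definition herm :: "nat \<Rightarrow> complex mat \<Rightarrow> bool" where
  "herm n A \<longleftrightarrow> (\<forall>i<n. \<forall>j<n. A $$ (i,j) = cnj (A $$ (j,i)))"

lemma herm_cnj: "herm n A \<Longrightarrow> i < n \<Longrightarrow> j < n \<Longrightarrow> cnj (A $$ (i,j)) = A $$ (j,i)"
  unfolding herm_def by (metis complex_cnj_cnj)

lemma hermI: "(\<And>i j. i < n \<Longrightarrow> j < n \<Longrightarrow> cnj (A $$ (j,i)) = A $$ (i,j)) \<Longrightarrow> herm n A"
  unfolding herm_def by metis

lemma KMK_index: assumes K: "K \<in> carrier_mat n n" and M: "M \<in> carrier_mat n n" and "i < n" "l < n"
  shows "(K * M * K) $$ (i,l) = (\<Sum>a<n. \<Sum>b<n. K $$ (i,a) * M $$ (a,b) * K $$ (b,l))"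
proof -
  have "(K * M * K) $$ (i,l) = (\<Sum>a<n. K $$ (i,a) * (\<Sum>b<n. M $$ (a,b) * K $$ (b,l)))"
    using assms by (simp add: scalar_prod_def atLeast0LessThan)
  also have "\<dots> = (\<Sum>a<n. \<Sum>b<n. K $$ (i,a) * M $$ (a,b) * K $$ (b,l))"
    by (simp add: sum_distrib_left mult.assoc)
  finally show ?thesis .
qed

lemma herm_KMK: assumes K: "K \<in> carrier_mat n n" and M: "M \<in> carrier_mat n n"
  and hK: "herm n K" and hM: "herm n M" shows "herm n (K * M * K)"
  unfolding herm_def
proof (intro allI impI)
  fix i j assume i: "i < n" and j: "j < n"
  have "cnj ((K * M * K) $$ (j,i)) = (\<Sum>a<n. \<Sum>b<n. cnj (K $$ (j,a)) * cnj (M $$ (a,b)) * cnj (K $$ (b,i)))"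
    unfolding KMK_index[OF K M j i] by simp
  also have "\<dots> = (\<Sum>a<n. \<Sum>b<n. K $$ (i,b) * M $$ (b,a) * K $$ (a,j))"
    using i j by (intro sum.cong refl) (simp add: herm_cnj[OF hK] herm_cnj[OF hM] mult.commute mult.left_commute)
  also have "\<dots> = (\<Sum>b<n. \<Sum>a<n. K $$ (i,b) * M $$ (b,a) * K $$ (a,j))" by (rule sum.swap)
  also have "\<dots> = (K * M * K) $$ (i,j)" unfolding KMK_index[OF K M i j] by simp
  finally show "(K * M * K) $$ (i,j) = cnj ((K * M * K) $$ (j,i))" by simp
qed

lemma herm_comb: assumes "A \<in> carrier_mat n n" "B \<in> carrier_mat n n" "C \<in> carrier_mat n n"
  "herm n A" "herm n B" "herm n C"
  shows "herm n (A - (complex_of_real s \<cdot>\<^sub>m B - complex_of_real t \<cdot>\<^sub>m C))"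
  by (rule hermI) (use assms in \<open>simp add: herm_cnj\<close>)

lemma psd_herm: "psd n M \<Longrightarrow> herm n M"
  unfolding psd_def herm_def using herm_iff by blast

lemma herm_Y: "herm 2 (Ymat y1 y2 u1 u2)"
  by (rule hermI) (auto simp: Ymat_def mult.commute mult.left_commute)

lemma herm_kron: assumes "herm 2 A" "herm d B" "A \<in> carrier_mat 2 2" "0 < d"
  shows "herm (2*d) (kron 2 d A B)"
proof (rule hermI)
  fix i j assume i: "i < 2*d" and j: "j < 2*d"
  have "i div d < 2" "j div d < 2" "i mod d < d" "j mod d < d" using i j div_lt2 assms(4) by auto
  then show "cnj (kron 2 d A B $$ (j, i)) = kron 2 d A B $$ (i, j)"
    using assms i j by (simp add: kron_index herm_cnj)
qed

lemma herm_ptrace_A: assumes "herm (2*d) M" shows "herm d (ptrace_A 2 d M)"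
proof (rule hermI)
  fix k l assume k: "k < d" and l: "l < d"
  have b: "k < 2*d" "l < 2*d" "d + k < 2*d" "d + l < 2*d" using k l by auto
  show "cnj (ptrace_A 2 d M $$ (l, k)) = ptrace_A 2 d M $$ (k, l)"
    using k l b assms unfolding ptrace_A_def by (simp add: sum2 herm_cnj)
qed

lemma herm_half_id: "herm n ((1/2) \<cdot>\<^sub>m 1\<^sub>m n)" by (rule hermI) simp


lemma T_sum: assumes d: "0 < d"
  and U: "\<And>j j'. j < 2 \<Longrightarrow> j' < 2 \<Longrightarrow> u1 j * cnj (u1 j') + u2 j * cnj (u2 j') = (if j = j' then 1 else 0)"
  shows "Sf (2*d) (kron 2 d ((1/2) \<cdot>\<^sub>m 1\<^sub>m 2) (ptrace_A 2 d M)) x x =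
    (1/2) * (Sf (2*d) M (tens d u1 (cfun d u1 x)) (tens d u1 (cfun d u1 x))
           + Sf (2*d) M (tens d u2 (cfun d u1 x)) (tens d u2 (cfun d u1 x))
           + Sf (2*d) M (tens d u1 (cfun d u2 x)) (tens d u1 (cfun d u2 x))
           + Sf (2*d) M (tens d u2 (cfun d u2 x)) (tens d u2 (cfun d u2 x)))"
proof -
  define h where "h = (\<lambda>u c k k'. (\<Sum>j<2. \<Sum>j'<2. cnj (u j) * M $$ (j*d+k, j'*d+k') * u j') * (cnj (c k) * (c::nat\<Rightarrow>complex) k'))"
  define c1 where "c1 = cfun d u1 x"
  define c2 where "c2 = cfun d u2 x"
  have e: "Sf (2*d) M (tens d u c) (tens d u c) = (\<Sum>k<d. \<Sum>k'<d. h u c k k')" for u c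
    unfolding Sf_tens[OF d] h_def by simp
  have "Sf (2*d) (kron 2 d ((1/2) \<cdot>\<^sub>m 1\<^sub>m 2) (ptrace_A 2 d M)) x x
     = (\<Sum>k<d. \<Sum>k'<d. (1/2) * (h u1 c1 k k' + h u2 c1 k k' + h u1 c2 k k' + h u2 c2 k k'))"
    unfolding Sf_T[OF d]
  proof (intro sum.cong refl)
    fix k k' show "1 / 2 * ((\<Sum>j<2. cnj (x (j * d + k)) * x (j * d + k')) * (\<Sum>i<2. M $$ (i * d + k, i * d + k'))) =
         1 / 2 * (h u1 c1 k k' + h u2 c1 k k' + h u1 c2 k k' + h u2 c2 k k')"
      unfolding h_def c1_def c2_def using pointwise[OF U, of x d k k' "\<lambda>j j'. M $$ (j*d+k, j'*d+k')"] by simp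
  qed
  also have "\<dots> = (1/2) * ((\<Sum>k<d. \<Sum>k'<d. h u1 c1 k k') + (\<Sum>k<d. \<Sum>k'<d. h u2 c1 k k')
      + (\<Sum>k<d. \<Sum>k'<d. h u1 c2 k k') + (\<Sum>k<d. \<Sum>k'<d. h u2 c2 k k'))"
    by (simp add: sum.distrib distrib_left sum_distrib_left)
  finally show ?thesis unfolding e c1_def c2_def .
qed


lemma main_psd:
  fixes y1 y2 s t :: real
  assumes d: "0 < d" and nu: "psd (2*d) \<nu>"
  and U: "\<And>j j'. j < 2 \<Longrightarrow> j' < 2 \<Longrightarrow> u1 j * cnj (u1 j') + u2 j * cnj (u2 j') = (if j = j' then 1 else 0)"
  and ys: "y1 * y2 = s" "y2^2 = s - t/2" "s \<le> y1^2" "0 \<le> t"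
  shows "psd (2*d) (kron 2 d (Ymat y1 y2 u1 u2) (1\<^sub>m d) * \<nu> * kron 2 d (Ymat y1 y2 u1 u2) (1\<^sub>m d)
     - (complex_of_real s \<cdot>\<^sub>m \<nu> - complex_of_real t \<cdot>\<^sub>m kron 2 d ((1/2) \<cdot>\<^sub>m 1\<^sub>m 2) (ptrace_A 2 d \<nu>)))"
proof -
  define K where "K = kron 2 d (Ymat y1 y2 u1 u2) (1\<^sub>m d)"
  define T where "T = kron 2 d ((1/2) \<cdot>\<^sub>m 1\<^sub>m 2) (ptrace_A 2 d \<nu>)"
  have nuC: "\<nu> \<in> carrier_mat (2*d) (2*d)" using nu unfolding psd_def by auto
  have KC: "K \<in> carrier_mat (2*d) (2*d)" unfolding K_def by (rule kron_carrier)
  have TC: "T \<in> carrier_mat (2*d) (2*d)" unfolding T_def by (rule kron_carrier)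
  have KMKC: "K * \<nu> * K \<in> carrier_mat (2*d) (2*d)" using KC nuC by simp
  have hnu: "herm (2*d) \<nu>" using psd_herm[OF nu] .
  have YC: "Ymat y1 y2 u1 u2 \<in> carrier_mat 2 2" unfolding Ymat_def by simp
  have hK: "herm (2*d) K" unfolding K_def
    by (rule herm_kron[OF herm_Y _ YC d]) (rule hermI, simp)
  have hT: "herm (2*d) T" unfolding T_def
    by (rule herm_kron[OF herm_half_id herm_ptrace_A[OF hnu] _ d]) simp
  have hF: "herm (2*d) (K * \<nu> * K - (complex_of_real s \<cdot>\<^sub>m \<nu> - complex_of_real t \<cdot>\<^sub>m T))"
    by (rule herm_comb[OF KMKC nuC TC herm_KMK[OF KC nuC hK hnu] hnu hT])
  have FC: "K * \<nu> * K - (complex_of_real s \<cdot>\<^sub>m \<nu> - complex_of_real t \<cdot>\<^sub>m T) \<in> carrier_mat (2*d) (2*d)"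
    using KMKC nuC TC by (intro minus_carrier_mat smult_carrier_mat) auto
  show ?thesis unfolding K_def[symmetric] T_def[symmetric]
  proof (rule psd_intro[OF FC])
    fix i j assume "i < 2*d" "j < 2*d"
    then show "(K * \<nu> * K - (complex_of_real s \<cdot>\<^sub>m \<nu> - complex_of_real t \<cdot>\<^sub>m T)) $$ (i, j) =
      cnj ((K * \<nu> * K - (complex_of_real s \<cdot>\<^sub>m \<nu> - complex_of_real t \<cdot>\<^sub>m T)) $$ (j, i))"
      using hF unfolding herm_def by blast
  next
    fix x
    define W1 where "W1 = tens d u1 (cfun d u1 x)"
    define W2 where "W2 = tens d u2 (cfun d u2 x)"
    define V12 where "V12 = tens d u2 (cfun d u1 x)"
    define V21 where "V21 = tens d u1 (cfun d u2 x)"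
    let ?S = "Sf (2*d) \<nu>"
    have s1: "Sf (2*d) (K * \<nu> * K - (complex_of_real s \<cdot>\<^sub>m \<nu> - complex_of_real t \<cdot>\<^sub>m T)) x x
      = Sf (2*d) (K * \<nu> * K) x x - (of_real s * ?S x x - of_real t * Sf (2*d) T x x)"
    proof -
      have c1: "complex_of_real s \<cdot>\<^sub>m \<nu> \<in> carrier_mat (2*d) (2*d)" using nuC by simp
      have c2: "complex_of_real t \<cdot>\<^sub>m T \<in> carrier_mat (2*d) (2*d)" using TC by simp
      have c3: "complex_of_real s \<cdot>\<^sub>m \<nu> - complex_of_real t \<cdot>\<^sub>m T \<in> carrier_mat (2*d) (2*d)"
        using c2 by (rule minus_carrier_mat)
      show ?thesis unfolding Sf_minus[OF KMKC c3] Sf_minus[OF c1 c2] Sf_smult[OF nuC] Sf_smult[OF TC] ..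
    qed
    have "Sf (2*d) (K * \<nu> * K) x x = ?S (Kv (2*d) K x) (Kv (2*d) K x)"
      by (rule Sf_KMK[OF KC nuC]) (simp add: herm_cnj[OF hK])
    also have "\<dots> = ?S (\<lambda>a. of_real y1 * W1 a + of_real y2 * W2 a) (\<lambda>a. of_real y1 * W1 a + of_real y2 * W2 a)"
      unfolding K_def W1_def W2_def by (rule Sf_cong; simp add: Kv_decomp[OF d])
    also have "\<dots> = of_real (y1*y1) * ?S W1 W1 + of_real (y1*y2) * (?S W1 W2 + ?S W2 W1) + of_real (y2*y2) * ?S W2 W2"
      by (simp add: Sf_add_left Sf_add_right Sf_scale_left Sf_scale_right algebra_simps)
    finally have s2: "Sf (2*d) (K * \<nu> * K) x x = of_real (y1*y1) * ?S W1 W1 + of_real (y1*y2) * (?S W1 W2 + ?S W2 W1) + of_real (y2*y2) * ?S W2 W2" .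
    have "?S x x = ?S (\<lambda>a. W1 a + W2 a) (\<lambda>a. W1 a + W2 a)"
      unfolding W1_def W2_def by (rule Sf_cong; rule x_decomp[OF d _ U])
    also have "\<dots> = ?S W1 W1 + ?S W1 W2 + ?S W2 W1 + ?S W2 W2"
      by (simp add: Sf_add_left Sf_add_right)
    finally have s3: "?S x x = ?S W1 W1 + ?S W1 W2 + ?S W2 W1 + ?S W2 W2" .
    have s4: "Sf (2*d) T x x = (1/2) * (?S W1 W1 + ?S V12 V12 + ?S V21 V21 + ?S W2 W2)"
      unfolding T_def W1_def W2_def V12_def V21_def by (rule T_sum[OF d U])
    have ys': "complex_of_real y1 * complex_of_real y2 = of_real s"
      "complex_of_real y2 * complex_of_real y2 = of_real s - of_real t / 2"
      using ys by (simp_all add: power2_eq_square flip: of_real_mult)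
    have fin: "Sf (2*d) (K * \<nu> * K - (complex_of_real s \<cdot>\<^sub>m \<nu> - complex_of_real t \<cdot>\<^sub>m T)) x x
      = of_real (y1*y1 - s) * ?S W1 W1 + of_real (t/2) * (?S W1 W1 + ?S V12 V12 + ?S V21 V21)"
    proof -
      have ys'': "complex_of_real s = of_real y1 * of_real y2"
        "complex_of_real t = 2 * (of_real y1 * of_real y2 - of_real y2 * of_real y2)"
      proof -
        have r: "s = y1*y2" "t = 2*(y1*y2 - y2*y2)" using ys(1,2) by (simp_all add: power2_eq_square)
        show "complex_of_real s = of_real y1 * of_real y2"
          "complex_of_real t = 2 * (of_real y1 * of_real y2 - of_real y2 * of_real y2)" unfolding r by simp_all
      qed
      show ?thesis unfolding s1 s2 s3 s4 by (simp add: ys'' field_simps)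
    qed
    have p: "0 \<le> Re (?S W1 W1)" "0 \<le> Re (?S V12 V12)" "0 \<le> Re (?S V21 V21)"
      using psd_Sf[OF nu] by auto
    have "0 \<le> y1*y1 - s" using ys by (simp add: power2_eq_square)
    then show "0 \<le> Re (Sf (2*d) (K * \<nu> * K - (complex_of_real s \<cdot>\<^sub>m \<nu> - complex_of_real t \<cdot>\<^sub>m T)) x x)"
      unfolding fin using p ys(4) by simp
  qed
qed


definition colON :: "(nat \<Rightarrow> complex) \<Rightarrow> (nat \<Rightarrow> complex) \<Rightarrow> bool" where
  "colON u1 u2 \<longleftrightarrow> cnj (u1 0) * u1 0 + cnj (u1 1) * u1 1 = 1 \<and> cnj (u2 0) * u2 0 + cnj (u2 1) * u2 1 = 1
     \<and> cnj (u1 0) * u2 0 + cnj (u1 1) * u2 1 = 0"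

lemma mat2_eq: assumes "A \<in> carrier_mat 2 2" "B \<in> carrier_mat 2 2"
  "A $$ (0,0) = B $$ (0,0)" "A $$ (0,1) = B $$ (0,1)" "A $$ (1,0) = B $$ (1,0)" "A $$ (1,1) = B $$ (1,1)"
  shows "A = B"
proof (rule eq_matI)
  fix i j assume "i < dim_row B" "j < dim_col B"
  then have "i < 2" "j < 2" using assms by auto
  then show "A $$ (i,j) = B $$ (i,j)" using assms lt2 by (metis)
qed (use assms in auto)

lemma mult2_index: assumes "A \<in> carrier_mat 2 2" "B \<in> carrier_mat 2 2" "i < 2" "j < 2"
  shows "(A * B) $$ (i,j) = A $$ (i,0) * B $$ (0,j) + A $$ (i,1) * B $$ (1,j)"
  using assms by (simp add: scalar_prod_def sum2 atLeast0LessThan)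

lemma Ymat_carrier: "Ymat y1 y2 u1 u2 \<in> carrier_mat 2 2" unfolding Ymat_def by simp

lemma Ymat_index: "i < 2 \<Longrightarrow> j < 2 \<Longrightarrow> Ymat y1 y2 u1 u2 $$ (i,j) = of_real y1 * u1 i * cnj (u1 j) + of_real y2 * u2 i * cnj (u2 j)"
  unfolding Ymat_def by simp

lemma col_row: assumes "colON u1 u2"
  shows "\<And>j j'. j < 2 \<Longrightarrow> j' < 2 \<Longrightarrow> u1 j * cnj (u1 j') + u2 j * cnj (u2 j') = (if j = j' then 1 else 0)"
proof -
  define V where "V = mat 2 2 (\<lambda>(i,m). if m = 0 then u1 i else u2 i)"
  define W where "W = mat 2 2 (\<lambda>(m,i). if m = 0 then cnj (u1 i) else cnj (u2 i))"
  have VC: "V \<in> carrier_mat 2 2" "W \<in> carrier_mat 2 2" unfolding V_def W_def by auto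
  have c2: "cnj (u2 0) * u1 0 + cnj (u2 1) * u1 1 = 0"
  proof -
    have "cnj (cnj (u1 0) * u2 0 + cnj (u1 1) * u2 1) = 0" using assms unfolding colON_def by simp
    then show ?thesis by (simp add: mult.commute)
  qed
  have wv: "(W*V) $$ (i,j) = W $$ (i,0) * V $$ (0,j) + W $$ (i,1) * V $$ (1,j)" if "i < 2" "j < 2" for i j
    by (rule mult2_index[OF VC(2) VC(1) that])
  have ve: "V $$ (i,0) = u1 i" "V $$ (i,Suc 0) = u2 i" "W $$ (0,i) = cnj (u1 i)" "W $$ (Suc 0,i) = cnj (u2 i)" if "i < 2" for i
    using that unfolding V_def W_def by auto
  have "W * V = 1\<^sub>m 2"
    by (rule mat2_eq) (use VC assms c2 in \<open>simp_all add: wv ve colON_def del: index_mult_mat\<close>)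
  then have WV: "V * W = 1\<^sub>m 2" using mat_mult_left_right_inverse[OF VC(2) VC(1)] by simp
  fix j j' :: nat assume j: "j < 2" and j': "j' < 2"
  have "(V * W) $$ (j,j') = u1 j * cnj (u1 j') + u2 j * cnj (u2 j')"
    using j j' VC by (simp add: mult2_index[OF VC(1) VC(2) j j'] ve del: index_mult_mat)
  then show "u1 j * cnj (u1 j') + u2 j * cnj (u2 j') = (if j = j' then 1 else 0)"
    using WV j j' by simp
qed

lemma Ymat_mult: assumes "colON u1 u2"
  shows "Ymat a1 a2 u1 u2 * Ymat b1 b2 u1 u2 = Ymat (a1*b1) (a2*b2) u1 u2"
proof -
  have c2: "cnj (u2 0) * u1 0 + cnj (u2 1) * u1 1 = 0"
  proof -
    have "cnj (cnj (u1 0) * u2 0 + cnj (u1 1) * u2 1) = 0" using assms unfolding colON_def by simp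
    then show ?thesis by (simp add: mult.commute)
  qed
  have e: "(Ymat a1 a2 u1 u2 * Ymat b1 b2 u1 u2) $$ (i,l) = Ymat (a1*b1) (a2*b2) u1 u2 $$ (i,l)" if "i < 2" "l < 2" for i l
  proof -
    have "(Ymat a1 a2 u1 u2 * Ymat b1 b2 u1 u2) $$ (i,l) =
      of_real a1 * of_real b1 * u1 i * cnj (u1 l) * (cnj (u1 0) * u1 0 + cnj (u1 1) * u1 1)
      + of_real a1 * of_real b2 * u1 i * cnj (u2 l) * (cnj (u1 0) * u2 0 + cnj (u1 1) * u2 1)
      + of_real a2 * of_real b1 * u2 i * cnj (u1 l) * (cnj (u2 0) * u1 0 + cnj (u2 1) * u1 1)
      + of_real a2 * of_real b2 * u2 i * cnj (u2 l) * (cnj (u2 0) * u2 0 + cnj (u2 1) * u2 1)"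
      using that by (simp add: mult2_index[OF Ymat_carrier Ymat_carrier] Ymat_index algebra_simps)
    also have "\<dots> = Ymat (a1*b1) (a2*b2) u1 u2 $$ (i,l)"
      using assms c2 that unfolding colON_def by (simp add: Ymat_index)
    finally show ?thesis .
  qed
  show ?thesis by (rule mat2_eq) (auto simp: e Ymat_carrier mult_carrier_mat[OF Ymat_carrier Ymat_carrier] simp del: index_mult_mat)
qed

lemma Ymat_A: assumes AC: "A \<in> carrier_mat 2 2" and hA: "herm 2 A"
  and E1: "\<And>i. i < 2 \<Longrightarrow> A $$ (i,0) * u1 0 + A $$ (i,1) * u1 1 = of_real l1 * u1 i"
  and E2: "\<And>i. i < 2 \<Longrightarrow> A $$ (i,0) * u2 0 + A $$ (i,1) * u2 1 = of_real l2 * u2 i"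
  shows "Ymat a1 a2 u1 u2 * A = Ymat (a1*l1) (a2*l2) u1 u2"
proof -
  have cE: "cnj (u 0) * A $$ (0,l) + cnj (u 1) * A $$ (1,l) = of_real lam * cnj (u l)"
    if E: "\<And>i. i < 2 \<Longrightarrow> A $$ (i,0) * u 0 + A $$ (i,1) * u 1 = of_real lam * u i" and l: "l < 2" for u lam l
  proof -
    have "cnj (A $$ (l,0) * u 0 + A $$ (l,1) * u 1) = cnj (of_real lam * u l)" using E[OF l] by simp
    then show ?thesis using l by (simp add: herm_cnj[OF hA] mult.commute)
  qed
  have e: "(Ymat a1 a2 u1 u2 * A) $$ (i,l) = Ymat (a1*l1) (a2*l2) u1 u2 $$ (i,l)" if "i < 2" "l < 2" for i l
  proof -
    have "(Ymat a1 a2 u1 u2 * A) $$ (i,l) =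
      of_real a1 * u1 i * (cnj (u1 0) * A $$ (0,l) + cnj (u1 1) * A $$ (1,l))
      + of_real a2 * u2 i * (cnj (u2 0) * A $$ (0,l) + cnj (u2 1) * A $$ (1,l))"
      using that by (simp add: mult2_index[OF Ymat_carrier AC] Ymat_index algebra_simps)
    also have "\<dots> = Ymat (a1*l1) (a2*l2) u1 u2 $$ (i,l)"
      using that cE[OF E1 that(2)] cE[OF E2 that(2)] by (simp add: Ymat_index)
    finally show ?thesis .
  qed
  show ?thesis by (rule mat2_eq) (use AC in \<open>auto simp: e Ymat_carrier mult_carrier_mat[OF Ymat_carrier AC] simp del: index_mult_mat\<close>)
qed

lemma Ymat_one: assumes U: "\<And>j j'. j < 2 \<Longrightarrow> j' < 2 \<Longrightarrow> u1 j * cnj (u1 j') + u2 j * cnj (u2 j') = (if j = j' then 1 else 0)"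
  shows "Ymat 1 1 u1 u2 = 1\<^sub>m 2"
  by (rule mat2_eq) (auto simp: Ymat_carrier Ymat_index U)

lemma psd_Ymat: assumes "0 \<le> y1" "0 \<le> y2" shows "psd 2 (Ymat y1 y2 u1 u2)"
proof (rule psd_intro[OF Ymat_carrier])
  fix i j :: nat assume "i < 2" "j < 2"
  then show "Ymat y1 y2 u1 u2 $$ (i, j) = cnj (Ymat y1 y2 u1 u2 $$ (j, i))"
    using herm_Y[of y1 y2 u1 u2] unfolding herm_def by blast
next
  fix x :: "nat \<Rightarrow> complex"
  define z1 where "z1 = cnj (u1 0) * x 0 + cnj (u1 1) * x 1"
  define z2 where "z2 = cnj (u2 0) * x 0 + cnj (u2 1) * x 1"
  have "Sf 2 (Ymat y1 y2 u1 u2) x x = of_real y1 * (cnj z1 * z1) + of_real y2 * (cnj z2 * z2)"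
    unfolding Sf_def z1_def z2_def by (simp add: sum2 Ymat_index algebra_simps)
  moreover have "Re (cnj z * z) \<ge> 0" for z :: complex
    by (simp add: power2_eq_square[symmetric])
  ultimately show "0 \<le> Re (Sf 2 (Ymat y1 y2 u1 u2) x x)" using assms
    by (simp add: Re_complex_of_real)
qed


lemma Sf2: "Sf 2 X v v = cnj (v 0) * X $$ (0,0) * v 0 + cnj (v 0) * X $$ (0,1) * v 1 + cnj (v 1) * X $$ (1,0) * v 0 + cnj (v 1) * X $$ (1,1) * v 1"
  unfolding Sf_def by (simp add: sum2)

lemma psd2_facts: assumes "psd 2 X"
  shows "X $$ (0,0) = of_real (Re (X $$ (0,0)))" "X $$ (1,1) = of_real (Re (X $$ (1,1)))"
    "X $$ (1,0) = cnj (X $$ (0,1))" "0 \<le> Re (X $$ (0,0))" "0 \<le> Re (X $$ (1,1))"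
    "(cmod (X $$ (0,1)))^2 \<le> Re (X $$ (0,0)) * Re (X $$ (1,1))"
proof -
  have h: "herm 2 X" using psd_herm[OF assms] .
  have c00: "cnj (X $$ (0,0)) = X $$ (0,0)" and c11: "cnj (X $$ (1,1)) = X $$ (1,1)" and c10: "X $$ (1,0) = cnj (X $$ (0,1))"
    using herm_cnj[OF h, of 0 0] herm_cnj[OF h, of 1 1] herm_cnj[OF h, of 0 1] by auto
  show e0: "X $$ (0,0) = of_real (Re (X $$ (0,0)))" using c00 by (simp add: complex_eq_iff)
  show e1: "X $$ (1,1) = of_real (Re (X $$ (1,1)))" using c11 by (simp add: complex_eq_iff)
  show "X $$ (1,0) = cnj (X $$ (0,1))" by (rule c10)
  define P where "P = Re (X $$ (0,0))"
  define R where "R = Re (X $$ (1,1))"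
  define qa where "qa = Re (X $$ (0,1))"
  define qb where "qb = Im (X $$ (0,1))"
  have q: "X $$ (0,1) = Complex qa qb" unfolding qa_def qb_def by simp
  have X10: "X $$ (1,0) = Complex qa (-qb)" using c10 q by (simp add: complex_eq_iff)
  have form: "Re (Sf 2 X v v) = P * ((Re (v 0))^2 + (Im (v 0))^2) + R * ((Re (v 1))^2 + (Im (v 1))^2)
     + 2 * (qa * (Re (v 0) * Re (v 1) + Im (v 0) * Im (v 1)) + qb * (Im (v 0) * Re (v 1) - Re (v 0) * Im (v 1)))" for v
    unfolding Sf2 using e0 e1 q X10 unfolding P_def[symmetric] R_def[symmetric]
    by (simp add: algebra_simps power2_eq_square)
  have pos: "0 \<le> Re (Sf 2 X v v)" for v using psd_Sf[OF assms] .
  show "0 \<le> Re (X $$ (0,0))" using pos[of "\<lambda>i. if i = 0 then 1 else 0"] unfolding form P_def[symmetric] by simp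
  show "0 \<le> Re (X $$ (1,1))" using pos[of "\<lambda>i. if i = 0 then 0 else 1"] unfolding form R_def[symmetric] by simp
  have cq: "(cmod (X $$ (0,1)))^2 = qa^2 + qb^2" unfolding q by (simp add: cmod_def)
  have a: "0 \<le> P * (P * R - (qa^2 + qb^2))"
    using pos[of "\<lambda>i. if i = 0 then - Complex qa qb else of_real P"] unfolding form
    by (simp add: algebra_simps power2_eq_square)
  have b: "0 \<le> R * (P * R - (qa^2 + qb^2))"
    using pos[of "\<lambda>i. if i = 0 then of_real R else - Complex qa (-qb)"] unfolding form
    by (simp add: algebra_simps power2_eq_square)
  have c: "0 \<le> P + R * (qa^2 + qb^2) - 2 * (qa^2 + qb^2)"
    using pos[of "\<lambda>i. if i = 0 then 1 else - Complex qa (-qb)"] unfolding form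
    by (simp add: algebra_simps power2_eq_square)
  have P0: "0 \<le> P" using pos[of "\<lambda>i. if i = 0 then 1 else 0"] unfolding form by simp
  have R0: "0 \<le> R" using pos[of "\<lambda>i. if i = 0 then 0 else 1"] unfolding form by simp
  have "qa^2 + qb^2 \<le> P * R"
  proof (cases "P > 0")
    case True then show ?thesis using a by (simp add: zero_le_mult_iff)
  next
    case False
    then have "P = 0" using P0 by simp
    show ?thesis
    proof (cases "R > 0")
      case True then show ?thesis using b by (simp add: zero_le_mult_iff)
    next
      case False
      then have "R = 0" using R0 by simp
      then show ?thesis using c \<open>P = 0\<close> by (simp add: add_nonneg_nonneg)
    qed
  qed
  then show "(cmod (X $$ (0,1)))^2 \<le> Re (X $$ (0,0)) * Re (X $$ (1,1))" unfolding cq P_def R_def .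
qed


definition Bm :: "real \<Rightarrow> real \<Rightarrow> complex \<Rightarrow> real \<Rightarrow> complex mat" where
  "Bm ar cr b \<delta> = mat 2 2 (\<lambda>(i,j). if i = 0 then (if j = 0 then of_real (cr/\<delta>) else - b / of_real \<delta>)
      else (if j = 0 then - cnj b / of_real \<delta> else of_real (ar/\<delta>)))"

definition Xf :: "real \<Rightarrow> real \<Rightarrow> complex \<Rightarrow> real \<Rightarrow> complex mat" where
  "Xf ar cr b \<delta> = (let s0 = 1 / sqrt \<delta>; \<tau> = sqrt (1/\<delta> + 2*s0) in
     mat 2 2 (\<lambda>(i,j). if i = 0 then (if j = 0 then of_real ((cr/\<delta> + s0)/\<tau>) else - b / of_real (\<delta>*\<tau>))
      else (if j = 0 then - cnj b / of_real (\<delta>*\<tau>) else of_real ((ar/\<delta> + s0)/\<tau>))))"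

locale A2 =
  fixes A :: "complex mat" and ar cr \<delta> :: real and b :: complex
  assumes AC: "A \<in> carrier_mat 2 2"
    and A00: "A $$ (0,0) = of_real ar" and A11: "A $$ (1,1) = of_real cr"
    and A01: "A $$ (0,1) = b" and A10: "A $$ (1,0) = cnj b"
    and tr: "ar + cr = 1" and det: "ar * cr - (cmod b)^2 = \<delta>" and dpos: "0 < \<delta>"
begin

lemma BC: "Bm ar cr b \<delta> \<in> carrier_mat 2 2" unfolding Bm_def by simp

lemma bb: "b * cnj b = of_real ((cmod b)^2)" "cnj b * b = of_real ((cmod b)^2)"
  using complex_norm_square[of b] by (simp_all add: mult.commute)

lemma AB: "A * Bm ar cr b \<delta> = 1\<^sub>m 2"
proof -
  have d: "complex_of_real \<delta> \<noteq> 0" using dpos by simp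
  have dc: "complex_of_real ar * of_real cr - of_real ((cmod b)^2) = of_real \<delta>"
    using det by (metis of_real_diff of_real_mult)
  have m: "(A * Bm ar cr b \<delta>) $$ (i,j) = A $$ (i,0) * Bm ar cr b \<delta> $$ (0,j) + A $$ (i,1) * Bm ar cr b \<delta> $$ (1,j)"
    if "i < 2" "j < 2" for i j by (rule mult2_index[OF AC BC that])
  have Be: "Bm ar cr b \<delta> $$ (0,0) = of_real (cr/\<delta>)" "Bm ar cr b \<delta> $$ (0,Suc 0) = - b / of_real \<delta>"
    "Bm ar cr b \<delta> $$ (Suc 0,0) = - cnj b / of_real \<delta>" "Bm ar cr b \<delta> $$ (Suc 0,Suc 0) = of_real (ar/\<delta>)"
    unfolding Bm_def by simp_all
  have Ae: "A $$ (0,0) = of_real ar" "A $$ (Suc 0,Suc 0) = of_real cr" "A $$ (0,Suc 0) = b" "A $$ (Suc 0,0) = cnj b"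
    using A00 A11 A01 A10 by simp_all
  show ?thesis
  proof (rule mat2_eq)
    show "A * Bm ar cr b \<delta> \<in> carrier_mat 2 2" using AC BC by simp
  qed (use AC BC d dc in \<open>simp_all add: m Be Ae bb field_simps del: index_mult_mat\<close>)
qed


lemma XX_B: assumes XC: "X \<in> carrier_mat 2 2" and XXA: "X * X * A = 1\<^sub>m 2"
  shows "X * X = Bm ar cr b \<delta>"
proof -
  have XX: "X * X \<in> carrier_mat 2 2" using XC by simp
  have "X * X = (X * X) * (A * Bm ar cr b \<delta>)" unfolding AB using right_mult_one_mat[OF XX] by simp
  also have "\<dots> = (X * X * A) * Bm ar cr b \<delta>" using XX AC BC by (simp add: assoc_mult_mat)
  also have "\<dots> = Bm ar cr b \<delta>" unfolding XXA using BC by simp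
  finally show ?thesis .
qed

lemma uniq: assumes X: "psd 2 X" and XXA: "X * X * A = 1\<^sub>m 2"
  shows "X = Xf ar cr b \<delta>"
proof -
  have XC: "X \<in> carrier_mat 2 2" using X unfolding psd_def by auto
  note f = psd2_facts[OF X]
  define P where "P = Re (X $$ (0,0))"
  define R where "R = Re (X $$ (1,1))"
  define q where "q = X $$ (0,1)"
  define Q where "Q = (cmod q)^2"
  define \<beta> where "\<beta> = (cmod b)^2"
  have Xe: "X $$ (0,0) = of_real P" "X $$ (Suc 0,Suc 0) = of_real R" "X $$ (0,Suc 0) = q" "X $$ (Suc 0,0) = cnj q"
    using f(1,2,3) unfolding P_def R_def q_def by simp_all
  have P0: "0 \<le> P" and R0: "0 \<le> R" and QPR: "Q \<le> P * R" using f(4,5,6) unfolding P_def R_def Q_def q_def by simp_all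
  have qq: "q * cnj q = of_real Q" "cnj q * q = of_real Q"
    using complex_norm_square[of q] unfolding Q_def by (simp_all add: mult.commute)
  have XXB: "X * X = Bm ar cr b \<delta>" by (rule XX_B[OF XC XXA])
  have m: "(X * X) $$ (i,j) = X $$ (i,0) * X $$ (0,j) + X $$ (i,1) * X $$ (1,j)"
    if "i < 2" "j < 2" for i j by (rule mult2_index[OF XC XC that])
  have Be: "Bm ar cr b \<delta> $$ (0,0) = of_real (cr/\<delta>)" "Bm ar cr b \<delta> $$ (0,Suc 0) = - b / of_real \<delta>"
    "Bm ar cr b \<delta> $$ (Suc 0,0) = - cnj b / of_real \<delta>" "Bm ar cr b \<delta> $$ (Suc 0,Suc 0) = of_real (ar/\<delta>)"
    unfolding Bm_def by simp_all
  have e00: "of_real (P*P + Q) = (of_real (cr/\<delta>) :: complex)"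
    using m[of 0 0] XXB Be(1) Xe qq by simp
  have e11: "of_real (Q + R*R) = (of_real (ar/\<delta>) :: complex)"
    using m[of 1 1] XXB Be(4) Xe qq by simp
  have e01: "q * of_real (P + R) = - b / of_real \<delta>"
    using m[of 0 1] XXB Be(2) Xe by (simp add: algebra_simps)
  have r00: "P*P + Q = cr/\<delta>" using e00 of_real_eq_iff by blast
  have r11: "Q + R*R = ar/\<delta>" using e11 of_real_eq_iff by blast
  have r01: "Q * (P+R)^2 = \<beta> / \<delta>^2"
  proof -
    have "cmod (q * of_real (P + R)) = cmod (- b / of_real \<delta>)" using e01 by simp
    moreover have "cmod (complex_of_real (P + R)) = P + R" using P0 R0 by (simp only: norm_of_real)
    ultimately have "cmod q * (P+R) = cmod b / \<delta>" using dpos by (simp only: norm_mult norm_divide norm_minus_cancel) simp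
    then have "(cmod q * (P+R))^2 = (cmod b / \<delta>)^2" by simp
    then show ?thesis unfolding Q_def \<beta>_def by (simp add: power_mult_distrib power_divide)
  qed
  define D where "D = P*R - Q"
  have D0: "0 \<le> D" using QPR unfolding D_def by simp
  have "D^2 = (P*P + Q) * (Q + R*R) - Q * (P+R)^2" unfolding D_def by (simp add: algebra_simps power2_eq_square)
  also have "\<dots> = (ar * cr - \<beta>) / \<delta>^2" unfolding r00 r11 r01 using dpos by (simp add: field_simps power2_eq_square)
  also have "\<dots> = 1 / \<delta>" using det dpos unfolding \<beta>_def by (simp add: power2_eq_square)
  finally have D2: "D^2 = 1/\<delta>" .
  define s0 where "s0 = 1 / sqrt \<delta>"
  define \<tau> where "\<tau> = sqrt (1/\<delta> + 2*s0)"
  have Ds: "D = s0" unfolding s0_def using D2 D0 dpos by (metis real_sqrt_divide real_sqrt_one real_sqrt_unique)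
  have "(P+R)^2 = (P*P + Q) + (Q + R*R) + 2*D" unfolding D_def by (simp add: algebra_simps power2_eq_square)
  also have "\<dots> = 1/\<delta> + 2*s0" unfolding r00 r11 Ds using tr dpos by (simp add: field_simps)
  finally have "(P+R)^2 = 1/\<delta> + 2*s0" .
  then have PRt: "P + R = \<tau>" unfolding \<tau>_def using P0 R0 by (simp add: real_sqrt_unique)
  have s0p: "0 < s0" unfolding s0_def using dpos by simp
  have "0 < 1/\<delta>" using dpos by simp
  then have "0 < 1/\<delta> + 2*s0" using s0p by linarith
  then have tp: "0 < \<tau>" unfolding \<tau>_def by simp
  have Pv: "P = (cr/\<delta> + s0) / \<tau>"
  proof -
    have "P * \<tau> = P*P + P*R" unfolding PRt[symmetric] by (simp add: algebra_simps)
    also have "\<dots> = cr/\<delta> + D" using r00 unfolding D_def by simp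
    finally show ?thesis using tp Ds by (simp add: field_simps)
  qed
  have Rv: "R = (ar/\<delta> + s0) / \<tau>"
  proof -
    have "R * \<tau> = R*R + P*R" unfolding PRt[symmetric] by (simp add: algebra_simps)
    also have "\<dots> = ar/\<delta> + D" using r11 unfolding D_def by simp
    finally show ?thesis using tp Ds by (simp add: field_simps)
  qed
  have qv: "q = - b / of_real (\<delta> * \<tau>)"
    using e01 tp dpos unfolding PRt by (simp add: field_simps)
  have Xfe: "Xf ar cr b \<delta> $$ (0,0) = of_real ((cr/\<delta> + s0)/\<tau>)" "Xf ar cr b \<delta> $$ (0,Suc 0) = - b / of_real (\<delta>*\<tau>)"
    "Xf ar cr b \<delta> $$ (Suc 0,0) = - cnj b / of_real (\<delta>*\<tau>)" "Xf ar cr b \<delta> $$ (Suc 0,Suc 0) = of_real ((ar/\<delta> + s0)/\<tau>)"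
    unfolding Xf_def s0_def \<tau>_def Let_def by simp_all
  show ?thesis
  proof (rule mat2_eq)
    show "Xf ar cr b \<delta> \<in> carrier_mat 2 2" unfolding Xf_def Let_def by simp
  qed (use XC in \<open>simp_all add: Xe Xfe Pv Rv qv\<close>)
qed

end

locale A2e = A2 +
  fixes \<eta> :: real
  assumes e0: "0 \<le> \<eta>" and e1: "\<eta> < 1" and dlam: "\<delta> = (1-\<eta>)/2 * ((1+\<eta>)/2)"
begin

definition "l1 = (1-\<eta>)/2"
definition "l2 = (1+\<eta>)/2"

lemma l_facts: "l1 + l2 = 1" "l1 * l2 = \<delta>" "0 < l1" "0 < l2"
  unfolding l1_def l2_def dlam using e0 e1 by (simp_all add: field_simps)

lemma char: "(l - ar) * (l - cr) = (cmod b)^2" if "l = l1 \<or> l = l2"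
proof -
  have z: "(l - l1) * (l - l2) = 0" using that by auto
  have "l * l - l + l1 * l2 = (l - l1) * (l - l2) + l * (l1 + l2 - 1)" by (simp add: algebra_simps)
  then have h: "l * l - l + l1 * l2 = 0" using z l_facts(1) by simp
  have "(l - ar) * (l - cr) = (l * l - l + l1 * l2) + (ar * cr - \<delta>) + l * (1 - (ar + cr)) + (\<delta> - l1 * l2)"
    by (simp add: algebra_simps)
  then show ?thesis using h det tr l_facts(2) by simp
qed

lemma all2: "(\<forall>i<(2::nat). P i) \<longleftrightarrow> P 0 \<and> P 1"
  using lt2 by auto

definition ev :: "real \<Rightarrow> nat \<Rightarrow> complex" where
  "ev l i = (if i = 0 then b else of_real (l - ar)) / of_real (sqrt ((cmod b)^2 + (l - ar)^2))"

lemma ev_props: assumes b: "b \<noteq> 0" and l: "l = l1 \<or> l = l2"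
  shows "\<forall>i<2. A $$ (i,0) * ev l 0 + A $$ (i,1) * ev l 1 = of_real l * ev l i"
    "cnj (ev l 0) * ev l 0 + cnj (ev l 1) * ev l 1 = 1"
proof -
  define n where "n = sqrt ((cmod b)^2 + (l - ar)^2)"
  have bp: "0 < (cmod b)^2" using b by simp
  have np: "0 < n" unfolding n_def using bp by (simp add: add_pos_nonneg)
  have n2: "n * n = (cmod b)^2 + (l - ar)^2" unfolding n_def using bp
    by (simp add: add_pos_nonneg less_imp_le)
  have ch: "(l - ar) * (l - cr) = (cmod b)^2" by (rule char[OF l])
  have ev0: "ev l 0 = b / of_real n" and ev1: "ev l 1 = of_real (l - ar) / of_real n" unfolding ev_def n_def by simp_all
  have cr: "cr = 1 - ar" using tr by simp
  show "\<forall>i<2. A $$ (i,0) * ev l 0 + A $$ (i,1) * ev l 1 = of_real l * ev l i"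
    unfolding all2
  proof
    show "A $$ (0, 0) * ev l 0 + A $$ (0, 1) * ev l 1 = complex_of_real l * ev l 0"
      unfolding ev0 ev1 A00 A01 using np by (simp add: field_simps)
    have "cnj b * b + of_real cr * of_real (l - ar) = of_real l * of_real (l - ar)"
    proof -
      have "(cmod b)^2 + cr * (l - ar) = l * (l - ar)" using ch by (simp add: algebra_simps)
      then have "complex_of_real ((cmod b)^2 + cr * (l - ar)) = of_real (l * (l - ar))" by simp
      then show ?thesis using bb(2) by simp
    qed
    then show "A $$ (1, 0) * ev l 0 + A $$ (1, 1) * ev l 1 = complex_of_real l * ev l 1"
      unfolding ev0 ev1 A10 A11 using np by (simp add: field_simps)
  qed
  have "cnj b * b + of_real (l - ar) * of_real (l - ar) = of_real n * of_real n"
  proof -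
    have "complex_of_real ((cmod b)^2 + (l - ar) * (l - ar)) = of_real (n * n)" using n2 by (simp add: power2_eq_square)
    then show ?thesis using bb(2) by simp
  qed
  then show "cnj (ev l 0) * ev l 0 + cnj (ev l 1) * ev l 1 = 1"
    unfolding ev0 ev1 using np by (simp add: field_simps)
qed

lemma ev_cross: assumes b: "b \<noteq> 0"
  shows "cnj (ev l1 0) * ev l2 0 + cnj (ev l1 1) * ev l2 1 = 0"
proof -
  have "(cmod b)^2 + (l1 - ar) * (l2 - ar) = 0"
  proof -
    have "(l1 - ar) * (l2 - ar) = l1 * l2 - ar * (l1 + l2) + ar * ar" by (simp add: algebra_simps)
    also have "\<dots> = \<delta> - ar * cr"
    proof -
      have "ar * (ar + cr) = ar" using tr by simp
      then show ?thesis using l_facts(1,2) by (simp add: algebra_simps)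
    qed
    finally show ?thesis using det by simp
  qed
  then have "cnj b * b + of_real (l1 - ar) * of_real (l2 - ar) = 0"
    using bb(2) by (metis of_real_add of_real_mult of_real_0)
  moreover have "cnj (ev l1 0) * ev l2 0 + cnj (ev l1 1) * ev l2 1 =
    (cnj b * b + of_real (l1 - ar) * of_real (l2 - ar)) /
      (of_real (sqrt ((cmod b)^2 + (l1 - ar)^2)) * of_real (sqrt ((cmod b)^2 + (l2 - ar)^2)))"
    unfolding ev_def by (simp add: add_divide_distrib)
  ultimately show ?thesis by simp
qed

lemma Ae1: "A $$ (0,Suc 0) = b" "A $$ (Suc 0,0) = cnj b" "A $$ (Suc 0,Suc 0) = of_real cr"
  using A01 A10 A11 by simp_all

lemma eig_exists: "\<exists>u1 u2. colON u1 u2 \<and>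
   (\<forall>i<2. A $$ (i,0) * u1 0 + A $$ (i,1) * u1 1 = of_real l1 * u1 i) \<and>
   (\<forall>i<2. A $$ (i,0) * u2 0 + A $$ (i,1) * u2 1 = of_real l2 * u2 i)"
proof (cases "b = 0")
  case False
  have c: "colON (ev l1) (ev l2)" unfolding colON_def
    using ev_props(2)[OF False] ev_cross[OF False] by auto
  show ?thesis using c ev_props(1)[OF False] by blast
next
  case True
  have "(l1 - ar) * (l1 - cr) = 0" using char[of l1] True by simp
  then have "ar = l1 \<or> cr = l1" by auto
  then have cases: "(ar = l1 \<and> cr = l2) \<or> (ar = l2 \<and> cr = l1)" using tr l_facts(1) by auto
  define e0 :: "nat \<Rightarrow> complex" where "e0 = (\<lambda>i. if i = 0 then 1 else 0)"
  define e1 :: "nat \<Rightarrow> complex" where "e1 = (\<lambda>i. if i = 0 then 0 else 1)"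
  have ce: "colON e0 e1" "colON e1 e0" unfolding colON_def e0_def e1_def by simp_all
  show ?thesis
  proof (cases "ar = l1 \<and> cr = l2")
    case True2: True
    show ?thesis
      by (rule exI[of _ e0], rule exI[of _ e1])
        (use ce True True2 in \<open>simp add: all2 e0_def e1_def A00 Ae1\<close>)
  next
    case False
    then have h: "ar = l2" "cr = l1" using cases by auto
    show ?thesis
      by (rule exI[of _ e1], rule exI[of _ e0])
        (use ce True h in \<open>simp add: all2 e0_def e1_def A00 Ae1\<close>)
  qed
qed

end

context A2e begin

lemma hermA: "herm 2 A"
proof (rule hermI)
  fix i j :: nat assume "i < 2" "j < 2"
  then have "i = 0 \<or> i = 1" "j = 0 \<or> j = 1" by auto
  then show "cnj (A $$ (j,i)) = A $$ (i,j)" by (elim disjE) (simp_all add: A00 Ae1)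
qed

lemma inv_sqrt_eq: "\<exists>u1 u2. colON u1 u2 \<and> inv_sqrt 2 A = Ymat (sqrt (1/l1)) (sqrt (1/l2)) u1 u2"
proof -
  obtain u1 u2 where c: "colON u1 u2"
    and E1: "\<forall>i<2. A $$ (i,0) * u1 0 + A $$ (i,1) * u1 1 = of_real l1 * u1 i"
    and E2: "\<forall>i<2. A $$ (i,0) * u2 0 + A $$ (i,1) * u2 1 = of_real l2 * u2 i"
    using eig_exists by blast
  define y1 where "y1 = sqrt (1/l1)"
  define y2 where "y2 = sqrt (1/l2)"
  have y1s: "y1 * y1 * l1 = 1" unfolding y1_def using l_facts by simp
  have y2s: "y2 * y2 * l2 = 1" unfolding y2_def using l_facts by simp
  define Y0 where "Y0 = Ymat y1 y2 u1 u2"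
  have PY: "psd 2 Y0 \<and> Y0 * Y0 * A = 1\<^sub>m 2"
  proof
    show "psd 2 Y0" unfolding Y0_def by (rule psd_Ymat) (use l_facts in \<open>simp_all add: y1_def y2_def\<close>)
    have "Y0 * Y0 * A = Ymat (y1*y1) (y2*y2) u1 u2 * A" unfolding Y0_def Ymat_mult[OF c] ..
    also have "\<dots> = Ymat (y1*y1*l1) (y2*y2*l2) u1 u2"
      by (rule Ymat_A[OF AC hermA]) (use E1 E2 in auto)
    also have "\<dots> = 1\<^sub>m 2" unfolding y1s y2s by (rule Ymat_one[OF col_row[OF c]])
    finally show "Y0 * Y0 * A = 1\<^sub>m 2" .
  qed
  have "inv_sqrt 2 A = Y0" unfolding inv_sqrt_def
  proof (rule the_equality)
    show "psd 2 Y0 \<and> Y0 * Y0 * A = 1\<^sub>m 2" by (rule PY)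
    fix X assume "psd 2 X \<and> X * X * A = 1\<^sub>m 2"
    then have "X = Xf ar cr b \<delta>" using uniq by blast
    moreover have "Y0 = Xf ar cr b \<delta>" using uniq PY by blast
    ultimately show "X = Y0" by simp
  qed
  then show ?thesis using c unfolding Y0_def y1_def y2_def by blast
qed

end

lemma real_rel: fixes \<eta> :: real assumes e0: "0 \<le> \<eta>" and e1: "\<eta> < 1"
  defines "y1 \<equiv> sqrt (1/((1-\<eta>)/2))" and "y2 \<equiv> sqrt (1/((1+\<eta>)/2))"
  shows "y1 * y2 = s_fun \<eta>" "y2^2 = s_fun \<eta> - t_fun \<eta> / 2" "s_fun \<eta> \<le> y1^2" "0 \<le> t_fun \<eta>"
proof -
  have p1: "0 < 1 - \<eta>" "0 < 1 + \<eta>" using e0 e1 by auto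
  have q: "0 < 1 - \<eta>^2" using e0 e1 by (simp add: power_less_one_iff abs_less_iff)
  have sq: "sqrt (1 - \<eta>^2) > 0" using q by simp
  have "y1 * y2 = sqrt (4 / (1 - \<eta>^2))" unfolding y1_def y2_def
    using p1 by (simp add: real_sqrt_mult[symmetric] power2_eq_square field_simps)
  also have "\<dots> = 2 / sqrt (1 - \<eta>^2)" by (simp add: real_sqrt_divide)
  finally show "y1 * y2 = s_fun \<eta>" unfolding s_fun_def .
  have y2s: "y2^2 = 2/(1+\<eta>)" unfolding y2_def using p1 by simp
  have "t_fun \<eta> / 2 = 2 / sqrt (1 - \<eta>^2) - 2/(1+\<eta>)" 
  proof -
    have h4: "4 / (2 + \<eta> * 2) = 2 / (1 + \<eta>)" using p1 by (subst frac_eq_eq) auto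
    show ?thesis unfolding t_fun_def by (simp add: diff_divide_distrib h4)
  qed
  then show "y2^2 = s_fun \<eta> - t_fun \<eta> / 2" unfolding y2s s_fun_def by linarith
  have y1s: "y1^2 = 2/(1-\<eta>)" unfolding y1_def using p1 by simp
  have "1 - \<eta> \<le> sqrt (1 - \<eta>^2)"
  proof (rule real_le_rsqrt)
    show "(1 - \<eta>)^2 \<le> 1 - \<eta>^2" using e0 e1 by (simp add: power2_eq_square algebra_simps) (smt (verit) mult_left_le_one_le)
  qed
  then show "s_fun \<eta> \<le> y1^2" unfolding y1s s_fun_def using p1 sq by (simp add: frac_le)
  have "sqrt (1 - \<eta>^2) \<le> 1 + \<eta>"
    by (rule real_le_lsqrt) (use e0 in \<open>simp_all add: power2_eq_square algebra_simps\<close>)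
  then show "0 \<le> t_fun \<eta>" unfolding t_fun_def using p1 sq by (simp add: frac_le)
qed


theorem mainTheorem8:
  fixes d :: nat and \<nu> :: "complex mat" and \<eta> :: real
  assumes "density_op (2 * d) \<nu>"
    and "0 \<le> \<eta>" and "\<eta> < 1"
    and "spectrum (ptrace_B 2 d \<nu>) =
           {complex_of_real ((1 - \<eta>) / 2), complex_of_real ((1 + \<eta>) / 2)}"
  shows "loewner_le (2 * d)
           (complex_of_real (s_fun \<eta>) \<cdot>\<^sub>m \<nu>
              - complex_of_real (t_fun \<eta>) \<cdot>\<^sub>m kron 2 d ((1 / 2) \<cdot>\<^sub>m 1\<^sub>m 2) (ptrace_A 2 d \<nu>))
           (kron 2 d (inv_sqrt 2 (ptrace_B 2 d \<nu>)) (1\<^sub>m d) * \<nu>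
              * kron 2 d (inv_sqrt 2 (ptrace_B 2 d \<nu>)) (1\<^sub>m d))"
proof -
  have nu: "psd (2*d) \<nu>" and trn: "mtrace \<nu> = 1" using assms(1) unfolding density_op_def by auto
  have nuC: "\<nu> \<in> carrier_mat (2*d) (2*d)" using nu unfolding psd_def by auto
  have hnu: "herm (2*d) \<nu>" using psd_herm[OF nu] .
  have d: "0 < d"
  proof (rule ccontr)
    assume "\<not> 0 < d"
    then have "d = 0" by simp
    then have "mtrace \<nu> = 0" using nuC unfolding mtrace_def by simp
    then show False using trn by simp
  qed
  define A where "A = ptrace_B 2 d \<nu>"
  have AC: "A \<in> carrier_mat 2 2" unfolding A_def ptrace_B_def by simp
  have Aij: "A $$ (i,j) = (\<Sum>k<d. \<nu> $$ (i*d+k, j*d+k))" if "i < 2" "j < 2" for i j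
    using that unfolding A_def ptrace_B_def by simp
  have bnd: "i*d+k < 2*d" if "i < 2" "k < d" for i k
  proof -
    have "i = 0 \<or> i = 1" using that by auto
    then show ?thesis using that by auto
  qed
  have hA: "cnj (A $$ (j,i)) = A $$ (i,j)" if "i < 2" "j < 2" for i j
    unfolding Aij[OF that] Aij[OF that(2,1)] using that bnd
    by (simp add: herm_cnj[OF hnu])
  define ar where "ar = Re (A $$ (0,0))"
  define cr where "cr = Re (A $$ (1,1))"
  define b where "b = A $$ (0,1)"
  have A00: "A $$ (0,0) = of_real ar" using hA[of 0 0] unfolding ar_def by (simp add: complex_eq_iff)
  have A11: "A $$ (1,1) = of_real cr" using hA[of 1 1] unfolding cr_def by (simp add: complex_eq_iff)
  have A01: "A $$ (0,1) = b" unfolding b_def ..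
  have A10: "A $$ (1,0) = cnj b" using hA[of 1 0] unfolding b_def by simp
  have "mtrace \<nu> = (\<Sum>j<2. \<Sum>k<d. \<nu> $$ (j*d+k, j*d+k))"
    unfolding mtrace_def using nuC by (simp add: sum_2d)
  also have "\<dots> = A $$ (0,0) + A $$ (1,1)" using Aij[of 0 0] Aij[of 1 1] by (simp add: sum2)
  finally have "complex_of_real (ar + cr) = 1" using trn A00 A11 by simp
  then have tr: "ar + cr = 1" by (metis of_real_eq_1_iff)
  define l where "l = (1 - \<eta>)/2"
  have "complex_of_real l \<in> spectrum A" using assms(4) unfolding A_def l_def by simp
  then obtain v where v: "v \<in> carrier_vec 2" "v \<noteq> 0\<^sub>v 2" "A *\<^sub>v v = of_real l \<cdot>\<^sub>v v"
    unfolding spectrum_def eigenvalue_def eigenvector_def using AC by auto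
  have row: "(A *\<^sub>v v) $ i = A $$ (i,0) * v $ 0 + A $$ (i,1) * v $ 1" if "i < 2" for i
    using that AC v(1) by (simp add: scalar_prod_def sum2 atLeast0LessThan)
  have ev: "A $$ (i,0) * v $ 0 + A $$ (i,1) * v $ 1 = of_real l * v $ i" if "i < 2" for i
  proof -
    have "(A *\<^sub>v v) $ i = (of_real l \<cdot>\<^sub>v v) $ i" using v(3) by simp
    then show ?thesis using row[OF that] that v(1) by simp
  qed
  have eq1: "(of_real ar - of_real l) * v $ 0 + b * v $ 1 = 0" using ev[of 0] A00 A01 by (simp add: algebra_simps)
  have eq2: "cnj b * v $ 0 + (of_real cr - of_real l) * v $ 1 = 0" using ev[of 1] A10 A11 by (simp add: algebra_simps)
  have ch: "(of_real ar - of_real l) * (of_real cr - of_real l) - b * cnj b = (0::complex)"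
  proof -
    have "v $ 0 \<noteq> 0 \<or> v $ 1 \<noteq> 0"
    proof (rule ccontr)
      assume "\<not> (v $ 0 \<noteq> 0 \<or> v $ 1 \<noteq> 0)"
      then have "v = 0\<^sub>v 2" using v(1) lt2 by (intro eq_vecI) auto
      then show False using v(2) by simp
    qed
    moreover have "((of_real ar - of_real l) * (of_real cr - of_real l) - b * cnj b) * v $ 0 = 0"
    proof -
      have "((of_real ar - of_real l) * (of_real cr - of_real l) - b * cnj b) * v $ 0
        = (of_real cr - of_real l) * ((of_real ar - of_real l) * v $ 0 + b * v $ 1) - b * (cnj b * v $ 0 + (of_real cr - of_real l) * v $ 1)"
        by (simp add: algebra_simps)
      then show ?thesis using eq1 eq2 by simp
    qed
    moreover have "((of_real ar - of_real l) * (of_real cr - of_real l) - b * cnj b) * v $ 1 = 0"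
    proof -
      have "((of_real ar - of_real l) * (of_real cr - of_real l) - b * cnj b) * v $ 1
        = (of_real ar - of_real l) * (cnj b * v $ 0 + (of_real cr - of_real l) * v $ 1) - cnj b * ((of_real ar - of_real l) * v $ 0 + b * v $ 1)"
        by (simp add: algebra_simps)
      then show ?thesis using eq1 eq2 by simp
    qed
    ultimately show ?thesis by auto
  qed
  have "complex_of_real ((ar - l) * (cr - l) - (cmod b)^2) = 0"
    using ch complex_norm_square[of b] by simp
  then have "(ar - l) * (cr - l) - (cmod b)^2 = 0" by (simp only: of_real_eq_0_iff)
  then have chr: "(ar - l) * (cr - l) = (cmod b)^2" by simp
  define \<delta> where "\<delta> = (1-\<eta>)/2 * ((1+\<eta>)/2)"
  have det: "ar * cr - (cmod b)^2 = \<delta>"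
  proof -
    have "ar * cr - (cmod b)^2 = ar * cr - (ar - l) * (cr - l)" using chr by simp
    also have "\<dots> = l * (ar + cr) - l * l" by (simp add: algebra_simps)
    also have "\<dots> = \<delta>" unfolding tr \<delta>_def l_def by (simp add: field_simps)
    finally show ?thesis .
  qed
  have dpos: "0 < \<delta>" unfolding \<delta>_def using assms(2,3) by simp
  interpret A2e A ar cr \<delta> b \<eta>
    by unfold_locales (fact AC A00 A11 A01 A10 tr det dpos assms(2) assms(3) \<delta>_def)+
  obtain u1 u2 where c: "colON u1 u2" and Yeq: "inv_sqrt 2 A = Ymat (sqrt (1/l1)) (sqrt (1/l2)) u1 u2"
    using inv_sqrt_eq by blast
  note rr = real_rel[OF assms(2) assms(3)]
  have Yeq': "inv_sqrt 2 A = Ymat (sqrt (1/((1-\<eta>)/2))) (sqrt (1/((1+\<eta>)/2))) u1 u2"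
    using Yeq unfolding l1_def l2_def .
  have P: "psd (2*d) (kron 2 d (inv_sqrt 2 A) (1\<^sub>m d) * \<nu> * kron 2 d (inv_sqrt 2 A) (1\<^sub>m d)
     - (complex_of_real (s_fun \<eta>) \<cdot>\<^sub>m \<nu> - complex_of_real (t_fun \<eta>) \<cdot>\<^sub>m kron 2 d ((1/2) \<cdot>\<^sub>m 1\<^sub>m 2) (ptrace_A 2 d \<nu>)))"
    unfolding Yeq' by (rule main_psd[OF d nu col_row[OF c] rr])
  have C1: "kron 2 d (inv_sqrt 2 A) (1\<^sub>m d) * \<nu> * kron 2 d (inv_sqrt 2 A) (1\<^sub>m d) \<in> carrier_mat (2*d) (2*d)"
    using kron_carrier[of 2 d] nuC by (meson mult_carrier_mat)
  have C2: "complex_of_real (s_fun \<eta>) \<cdot>\<^sub>m \<nu> - complex_of_real (t_fun \<eta>) \<cdot>\<^sub>m kron 2 d ((1/2) \<cdot>\<^sub>m 1\<^sub>m 2) (ptrace_A 2 d \<nu>) \<in> carrier_mat (2*d) (2*d)"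
    by (intro minus_carrier_mat smult_carrier_mat kron_carrier)
  show ?thesis unfolding loewner_le_def A_def[symmetric] using P C1 C2 by blast
qed


end
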